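(* (i) If $\omega$ is a standard Gaussian random variable, then $\mathbb P(|\omega|\ge x)\le \frac{2\exp(-x^2/2)}{\sqrt{2\pi}\,x}$ for all $x>0$. (ii) Let $0\le k<j$ be integers and let $\xi=(\xi_0,\dots,\xi_{2^j-1})$ be a vector of independent standard normal random variables. Let $\xi^*=(\xi^*_1,\dots,\xi^*_{2^j})$ be the non-increasing rearrangement of $(|\xi_0|,\dots,|\xi_{2^j-1}|)$. Then for every $K\ge1$, $$\mathbb P\big(\xi^*_{2^k}\ge K\sqrt{j-k}\big)\le\big(2e^{-K^2/2}\big)^{(j-k)2^k}\cdot e^{2^k}.$$ *)

theory Defs
  imports "HOL-Probability.Probability"
begin

text \<open>Non-increasing rearrangement of the finite family (a 0, ..., a (n-1)),
  indexed from 1: nonincr_rearr a n m is the m-th largest entry (with multiplicity),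
  for 1 <= m <= n.\<close>
definition nonincr_rearr :: "(nat \<Rightarrow> real) \<Rightarrow> nat \<Rightarrow> nat \<Rightarrow> real" where
  "nonincr_rearr a n m = rev (sort (map a [0..<n])) ! (m - 1)"

end

theory Submission
  imports Defs "HOL-Real_Asymp.Real_Asymp"
begin


lemma std_normal_deriv:
  assumes "x \<noteq> 0" shows "((\<lambda>y. - std_normal_density y / x) has_real_derivative (y * std_normal_density y / x)) (at y)"
  unfolding std_normal_density_def
  using assms by (auto intro!: derivative_eq_intros simp: field_simps power2_eq_square)

lemma std_normal_lim: assumes "x \<noteq> 0" shows "((\<lambda>y. - std_normal_density y / x) \<longlongrightarrow> 0) at_top"
proof -
  have "(std_normal_density \<longlongrightarrow> 0) at_top"
    unfolding std_normal_density_def by real_asymp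
  then have "((\<lambda>y. - std_normal_density y / x) \<longlongrightarrow> - 0 / x) at_top"
    using assms by (intro tendsto_intros)
  then show ?thesis by simp
qed

lemma half_tail:
  assumes "x > 0"
  shows "(\<integral>\<^sup>+y. ennreal (y * std_normal_density y / x) * indicator {x..} y \<partial>lborel)
     = ennreal (std_normal_density x / x)"
proof -
  have "(\<integral>\<^sup>+y. ennreal (y * std_normal_density y / x) * indicator {x..} y \<partial>lborel)
     = ennreal (0 - (- std_normal_density x / x))"
    by (rule nn_integral_FTC_atLeast[OF _ std_normal_deriv _ std_normal_lim])
       (use assms in auto)
  then show ?thesis by simp
qed

lemma half_tail2:
  assumes "x > 0"
  shows "(\<integral>\<^sup>+y. ennreal (- y * std_normal_density y / x) * indicator {..-x} y \<partial>lborel)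
     = ennreal (std_normal_density x / x)"
proof -
  have "(\<integral>\<^sup>+y. ennreal (- y * std_normal_density y / x) * indicator {..-x} y \<partial>lborel)
    = (\<integral>\<^sup>+y. ennreal (- (0 + -1 * y) * std_normal_density (0 + -1 * y) / x) * indicator {..-x} (0 + -1 * y) \<partial>lborel)"
    by (subst nn_integral_real_affine[where c="-1" and t=0]) auto
  also have "\<dots> = (\<integral>\<^sup>+y. ennreal (y * std_normal_density y / x) * indicator {x..} y \<partial>lborel)"
    by (intro nn_integral_cong) (auto simp: std_normal_density_def indicator_def)
  finally show ?thesis using half_tail[OF assms] by simp
qed

lemma gauss_tail_nn:
  fixes x :: real assumes "x > 0"
  shows "(\<integral>\<^sup>+y. ennreal (std_normal_density y) * indicator {y. x \<le> \<bar>y\<bar>} y \<partial>lborel)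
     \<le> ennreal (2 * exp (- x\<^sup>2 / 2) / (sqrt (2 * pi) * x))"
proof -
  have "(\<integral>\<^sup>+y. ennreal (std_normal_density y) * indicator {y. x \<le> \<bar>y\<bar>} y \<partial>lborel)
     \<le> (\<integral>\<^sup>+y. ennreal (y * std_normal_density y / x) * indicator {x..} y
            + ennreal (- y * std_normal_density y / x) * indicator {..-x} y \<partial>lborel)"
  proof (intro nn_integral_mono)
    fix y :: real
    have p: "0 \<le> std_normal_density y" by simp
    show "ennreal (std_normal_density y) * indicator {y. x \<le> \<bar>y\<bar>} y
      \<le> ennreal (y * std_normal_density y / x) * indicator {x..} y
            + ennreal (- y * std_normal_density y / x) * indicator {..-x} y"
    proof (cases "x \<le> y")
      case True
      have "std_normal_density y \<le> y * std_normal_density y / x"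
        using True assms p by (simp add: field_simps mult_right_mono)
      then show ?thesis using True assms by (auto simp: indicator_def intro: ennreal_leI)
    next
      case False
      show ?thesis
      proof (cases "y \<le> -x")
        case True
        have "x * std_normal_density y \<le> (- y) * std_normal_density y"
          using True p by (intro mult_right_mono) auto
        then have "std_normal_density y \<le> - y * std_normal_density y / x"
          using assms by (simp add: field_simps)
        then show ?thesis using True assms by (auto simp: indicator_def intro: ennreal_leI)
      qed (use False in \<open>auto simp: indicator_def\<close>)
    qed
  qed
  also have "\<dots> = ennreal (std_normal_density x / x) + ennreal (std_normal_density x / x)"
    using half_tail[OF assms] half_tail2[OF assms]
    by (subst nn_integral_add) auto
  also have "\<dots> = ennreal (2 * exp (- x\<^sup>2 / 2) / (sqrt (2 * pi) * x))"
    using assms by (subst ennreal_plus[symmetric]) (auto simp: std_normal_density_def field_simps)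
  finally show ?thesis .
qed



lemma gauss_tail_prob:
  assumes "prob_space M" and D: "distributed M lborel \<omega> (\<lambda>x. ennreal (std_normal_density x))"
    and "x > (0::real)"
  shows "measure M {s \<in> space M. \<bar>\<omega> s\<bar> \<ge> x} \<le> 2 * exp (- x\<^sup>2 / 2) / (sqrt (2 * pi) * x)"
proof -
  have meas: "\<omega> \<in> measurable M lborel" and eq: "distr M lborel \<omega> = density lborel (\<lambda>x. ennreal (std_normal_density x))"
    using D unfolding distributed_def by auto
  have S: "{y::real. x \<le> \<bar>y\<bar>} \<in> sets lborel" by measurable
  have "{s \<in> space M. \<bar>\<omega> s\<bar> \<ge> x} = \<omega> -` {y. x \<le> \<bar>y\<bar>} \<inter> space M" by auto
  then have "measure M {s \<in> space M. \<bar>\<omega> s\<bar> \<ge> x} = measure (distr M lborel \<omega>) {y. x \<le> \<bar>y\<bar>}"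
    using measure_distr[OF meas S] by simp
  also have "\<dots> = enn2real (\<integral>\<^sup>+y. ennreal (std_normal_density y) * indicator {y. x \<le> \<bar>y\<bar>} y \<partial>lborel)"
    unfolding eq measure_def using S by (subst emeasure_density) auto
  also have "\<dots> \<le> enn2real (ennreal (2 * exp (- x\<^sup>2 / 2) / (sqrt (2 * pi) * x)))"
    by (rule enn2real_mono[OF gauss_tail_nn[OF assms(3)]]) simp
  also have "\<dots> = 2 * exp (- x\<^sup>2 / 2) / (sqrt (2 * pi) * x)"
    using assms(3) by simp
  finally show ?thesis .
qed

lemma rearr_card:
  assumes "1 \<le> m" "m \<le> n" "T \<le> nonincr_rearr a n m"
  shows "m \<le> card {i. i < n \<and> T \<le> a i}"
proof -
  define xs where "xs = map a [0..<n]"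
  define ys where "ys = rev (sort xs)"
  have len: "length ys = n" "length (sort xs) = n" by (auto simp: ys_def xs_def)
  have big: "T \<le> ys ! i" if "i < m" for i
  proof -
    have "ys ! i = sort xs ! (n - 1 - i)" using that assms len by (simp add: ys_def rev_nth)
    moreover have "ys ! (m - 1) = sort xs ! (n - 1 - (m - 1))" using assms len by (simp add: ys_def rev_nth)
    moreover have "sort xs ! (n - 1 - (m - 1)) \<le> sort xs ! (n - 1 - i)"
      using that assms len by (intro sorted_nth_mono) auto
    moreover have "T \<le> ys ! (m - 1)" using assms(3) by (simp add: nonincr_rearr_def ys_def xs_def)
    ultimately show ?thesis by linarith
  qed
  have "m \<le> card {i. i < length ys \<and> T \<le> ys ! i}"
  proof -
    have "{..<m} \<subseteq> {i. i < length ys \<and> T \<le> ys ! i}" using big len assms by auto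
    from card_mono[OF _ this] show ?thesis by simp
  qed
  also have "\<dots> = length (filter (\<lambda>v. T \<le> v) ys)" by (simp add: length_filter_conv_card)
  also have "\<dots> = length (filter (\<lambda>v. T \<le> v) xs)"
    by (simp add: ys_def rev_filter[symmetric] filter_sort)
  also have "\<dots> = card {i. i < n \<and> T \<le> a i}"
    unfolding xs_def length_filter_conv_card by (intro arg_cong[where f=card]) auto
  finally show ?thesis .
qed

lemma pow_fact_le_exp: "real m ^ m / fact m \<le> exp (real m)"
proof -
  have s: "(\<lambda>n. real m ^ n /\<^sub>R fact n) sums exp (real m)" by (rule exp_converges)
  have "(\<Sum>n\<in>{m}. real m ^ n /\<^sub>R fact n) \<le> (\<Sum>n. real m ^ n /\<^sub>R fact n)"
    by (rule sum_le_suminf) (use s in \<open>auto simp: sums_iff\<close>)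
  then show ?thesis using s by (simp add: sums_iff divide_inverse mult.commute)
qed

lemma choose_bound:
  assumes "n = 2 ^ d * m"
  shows "real (n choose m) \<le> 2 ^ (d * m) * exp (real m)"
proof -
  have "real (n choose m) * fact m \<le> real n ^ m"
    using binomial_fact_pow[of n m] by (metis of_nat_fact of_nat_le_iff of_nat_mult of_nat_power)
  then have "real (n choose m) \<le> real n ^ m / fact m" by (simp add: field_simps)
  also have "\<dots> = 2 ^ (d * m) * (real m ^ m / fact m)"
    using assms by (simp add: power_mult_distrib power_mult)
  also have "\<dots> \<le> 2 ^ (d * m) * exp (real m)"
    by (intro mult_left_mono pow_fact_le_exp) auto
  finally show ?thesis .
qed



lemma part2:
  fixes M :: "'a measure"
  assumes P: "prob_space M" and kj: "k < j"
    and ind: "prob_space.indep_vars M (\<lambda>_. borel) \<xi> {..<2^j}"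
    and D: "\<forall>i<2^j. distributed M lborel (\<xi> i) (\<lambda>x. ennreal (std_normal_density x))"
    and K: "K \<ge> (1::real)"
  shows "measure M {s \<in> space M.
           nonincr_rearr (\<lambda>i. \<bar>\<xi> i s\<bar>) (2^j) (2^k) \<ge> K * sqrt (real j - real k)}
         \<le> (2 * exp (- K\<^sup>2 / 2)) ^ ((j - k) * 2^k) * exp (2^k)"
proof -
  interpret prob_space M by (rule P)
  define n :: nat where "n = 2^j"
  define m :: nat where "m = 2^k"
  define d where "d = j - k"
  define T where "T = K * sqrt (real j - real k)"
  have d1: "d \<ge> 1" and dr: "real j - real k = real d" using kj by (auto simp: d_def)
  have ndm: "n = 2 ^ d * m" using kj by (simp add: n_def m_def d_def power_add[symmetric])
  have m1: "1 \<le> m" and mn: "m \<le> n" using kj by (auto simp: m_def n_def)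
  have sd: "sqrt (real d) \<ge> 1" using d1 by simp
  have T1: "T \<ge> 1" unfolding T_def dr using K sd
    by (metis mult_mono' mult_1 order_trans zero_le_one)
  have T2: "T\<^sup>2 = K\<^sup>2 * real d" unfolding T_def dr by (simp add: power_mult_distrib)
  define q where "q = 2 * exp (- T\<^sup>2 / 2) / (sqrt (2 * pi) * T)"
  have q0: "q \<ge> 0" using T1 by (simp add: q_def)
  define A where "A i = \<xi> i -` {y. T \<le> \<bar>y\<bar>} \<inter> space M" for i
  have meas: "\<xi> i \<in> measurable M lborel" if "i < n" for i
    using D that unfolding distributed_def n_def by auto
  have Aev: "A i \<in> events" if "i < n" for i
  proof -
    have "{y::real. T \<le> \<bar>y\<bar>} \<in> sets borel" by measurable
    then have "{y::real. T \<le> \<bar>y\<bar>} \<in> sets lborel" by simp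
    from measurable_sets[OF meas[OF that] this] show ?thesis unfolding A_def .
  qed
  have Aq: "prob (A i) \<le> q" if "i < n" for i
  proof -
    have "A i = {s \<in> space M. \<bar>\<xi> i s\<bar> \<ge> T}" unfolding A_def by auto
    then show ?thesis using gauss_tail_prob[OF P, of "\<xi> i" T] D that T1
      by (simp add: q_def n_def)
  qed
  define Ss where "Ss = {S. S \<subseteq> {..<n} \<and> card S = m}"
  have finSs: "finite Ss" unfolding Ss_def by (rule finite_subset[of _ "Pow {..<n}"]) auto
  have cardSs: "card Ss = n choose m" unfolding Ss_def using n_subsets[of "{..<n}" m] by simp
  let ?E = "{s \<in> space M. nonincr_rearr (\<lambda>i. \<bar>\<xi> i s\<bar>) (2^j) (2^k) \<ge> K * sqrt (real j - real k)}"
  have sub: "?E \<subseteq> (\<Union>S\<in>Ss. \<Inter>i\<in>S. A i)"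
  proof
    fix s assume s: "s \<in> ?E"
    then have "m \<le> card {i. i < n \<and> T \<le> \<bar>\<xi> i s\<bar>}"
      using rearr_card[OF m1 mn] by (simp add: n_def m_def T_def)
    then obtain S where S: "S \<subseteq> {i. i < n \<and> T \<le> \<bar>\<xi> i s\<bar>}" "card S = m"
      by (meson obtain_subset_with_card_n)
    then have "S \<in> Ss" unfolding Ss_def by auto
    moreover have "S \<noteq> {}" using S m1 by auto
    moreover have "s \<in> (\<Inter>i\<in>S. A i)" using S s by (auto simp: A_def)
    ultimately show "s \<in> (\<Union>S\<in>Ss. \<Inter>i\<in>S. A i)" by blast
  qed
  have Sprops: "S \<subseteq> {..<n}" "S \<noteq> {}" "finite S" "card S = m" if "S \<in> Ss" for S
    using that m1 unfolding Ss_def by (auto intro: finite_subset)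
  have Iev: "(\<Inter>i\<in>S. A i) \<in> events" if "S \<in> Ss" for S
    using Sprops[OF that] Aev by (intro sets.finite_INT) auto
  have indS: "indep_sets (\<lambda>i. {\<xi> i -` B \<inter> space M | B. B \<in> sets borel}) {..<n}"
    using ind unfolding indep_vars_def2 n_def by auto
  have Iprob: "prob (\<Inter>i\<in>S. A i) \<le> q ^ m" if "S \<in> Ss" for S
  proof -
    have "prob (\<Inter>i\<in>S. A i) = (\<Prod>i\<in>S. prob (A i))"
    proof (rule indep_setsD[OF indS])
      show "\<forall>i\<in>S. A i \<in> {\<xi> i -` B \<inter> space M | B. B \<in> sets borel}"
      proof
        fix i assume "i \<in> S"
        have "{y::real. T \<le> \<bar>y\<bar>} \<in> sets borel" by measurable
        then show "A i \<in> {\<xi> i -` B \<inter> space M | B. B \<in> sets borel}" unfolding A_def by blast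
      qed
    qed (use Sprops[OF that] in auto)
    also have "\<dots> \<le> (\<Prod>i\<in>S. q)"
      using Sprops[OF that] Aq by (intro prod_mono) auto
    also have "\<dots> = q ^ m" using Sprops[OF that] by simp
    finally show ?thesis .
  qed
  have "prob ?E \<le> prob (\<Union>S\<in>Ss. \<Inter>i\<in>S. A i)"
    using sub finSs Iev by (intro finite_measure_mono) auto
  also have "\<dots> \<le> (\<Sum>S\<in>Ss. prob (\<Inter>i\<in>S. A i))"
    using finSs Iev by (intro measure_subadditive_finite) auto
  also have "\<dots> \<le> (\<Sum>S\<in>Ss. q ^ m)" using Iprob by (intro sum_mono) auto
  also have "\<dots> = real (n choose m) * q ^ m" using cardSs by simp
  also have "\<dots> \<le> (2 ^ (d * m) * exp (real m)) * exp (- K\<^sup>2 * real d / 2) ^ m"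
  proof (intro mult_mono power_mono)
    show "real (n choose m) \<le> 2 ^ (d * m) * exp (real m)" by (rule choose_bound[OF ndm])
    have "sqrt (2 * pi) \<ge> 2"
      using pi_gt3 by (simp add: real_le_rsqrt)
    then have "sqrt (2 * pi) * T \<ge> 2 * 1" using T1 by (intro mult_mono) auto
    then have "2 / (sqrt (2 * pi) * T) \<le> 1" by simp
    then have "q \<le> 1 * exp (- T\<^sup>2 / 2)" unfolding q_def
      by (metis exp_ge_zero mult_right_mono times_divide_eq_left)
    then show "q \<le> exp (- K\<^sup>2 * real d / 2)" by (simp add: T2)
  qed (use q0 in auto)
  also have "\<dots> = (2 * exp (- K\<^sup>2 / 2)) ^ ((j - k) * 2^k) * exp (2^k)"
  proof -
    have "exp (- K\<^sup>2 * real d / 2) ^ m = exp (- K\<^sup>2 / 2) ^ (d * m)"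
      by (simp add: exp_of_nat_mult[symmetric] power_mult exp_of_nat2_mult[symmetric] mult.commute)
    then show ?thesis
      by (simp add: m_def d_def power_mult_distrib)
  qed
  finally show ?thesis .
qed

theorem lemma4p3:
  fixes M :: "'a measure"
  assumes "prob_space M"
  shows
  "(\<forall>\<omega> :: 'a \<Rightarrow> real.
       distributed M lborel \<omega> (\<lambda>x. ennreal (std_normal_density x)) \<longrightarrow>
       (\<forall>x::real. x > 0 \<longrightarrow>
          measure M {s \<in> space M. \<bar>\<omega> s\<bar> \<ge> x}
            \<le> 2 * exp (- x\<^sup>2 / 2) / (sqrt (2 * pi) * x)))
   \<and>
   (\<forall>(k::nat) (j::nat) (\<xi> :: nat \<Rightarrow> 'a \<Rightarrow> real) (K::real).
       k < j \<longrightarrow>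
       prob_space.indep_vars M (\<lambda>_. borel) \<xi> {..<2^j} \<longrightarrow>
       (\<forall>i<2^j. distributed M lborel (\<xi> i) (\<lambda>x. ennreal (std_normal_density x))) \<longrightarrow>
       K \<ge> 1 \<longrightarrow>
       measure M {s \<in> space M.
           nonincr_rearr (\<lambda>i. \<bar>\<xi> i s\<bar>) (2^j) (2^k) \<ge> K * sqrt (real j - real k)}
         \<le> (2 * exp (- K\<^sup>2 / 2)) ^ ((j - k) * 2^k) * exp (2^k))"
  proof (intro conjI allI impI)
  fix \<omega> :: "'a \<Rightarrow> real" and x :: real
  assume "distributed M lborel \<omega> (\<lambda>x. ennreal (std_normal_density x))" "x > 0"
  then show "measure M {s \<in> space M. \<bar>\<omega> s\<bar> \<ge> x} \<le> 2 * exp (- x\<^sup>2 / 2) / (sqrt (2 * pi) * x)"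
    using gauss_tail_prob[OF assms] by blast
next
  fix k j :: nat and \<xi> :: "nat \<Rightarrow> 'a \<Rightarrow> real" and K :: real
  assume "k < j" "prob_space.indep_vars M (\<lambda>_. borel) \<xi> {..<2^j}"
    "\<forall>i<2^j. distributed M lborel (\<xi> i) (\<lambda>x. ennreal (std_normal_density x))" "K \<ge> 1"
  then show "measure M {s \<in> space M.
           nonincr_rearr (\<lambda>i. \<bar>\<xi> i s\<bar>) (2^j) (2^k) \<ge> K * sqrt (real j - real k)}
         \<le> (2 * exp (- K\<^sup>2 / 2)) ^ ((j - k) * 2^k) * exp (2^k)"
    using part2[OF assms] by blast
qed

end
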